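(* Let $\mathbf{x}$ be a probability vector for $S$ and define $W_{\rm for}=\inf\{W\in\mathbb{R}:\ \mathbf{g}\otimes(0,1)\succ_g\mathbf{x}\otimes(1,0)\text{ with respect to }H_{SW}(W)\}$. Then the infimum is attained and $$W_{\rm for}=kT\log\Big(Z_S\max_i x_ie^{\beta E_i}\Big)=kT\log\max_i\frac{x_i}{g_i}.$$
   Context: $S$ has Hamiltonian $H_S=\sum_{i=1}^nE_i|i\rangle\langle i|$, $\beta=1/(kT)>0$, $Z_S=\sum_ie^{-\beta E_i}$, Gibbs vector $g_i=e^{-\beta E_i}/Z_S$. The battery is a two-level system with Hamiltonian $W|1\rangle\langle1|$ and $H_{SW}(W)=H_S\otimes\mathbb{I}+\mathbb{I}\otimes W|1\rangle\langle1|$; $\mathbf{x}\otimes(1,0)$ denotes the product distribution with battery in $|0\rangle$, and $\mathbf{g}\otimes(0,1)$ with battery in $|1\rangle$. Thermo-majorisation for a Hamiltonian $H$ with eigenvalues $\epsilon_1,\dots,\epsilon_m$ and $Z=\sum_je^{-\beta\epsilon_j}$: for a probability vector $\mathbf{u}$ let $\pi$ order $u_{\pi(1)}e^{\beta\epsilon_{\pi(1)}}\ge\dots\ge u_{\pi(m)}e^{\beta\epsilon_{\pi(m)}}$; the curve $T(\mathbf{u})$ is the piecewise linear function on $[0,Z]$ joining the origin and $\big(\sum_{j\le k}e^{-\beta\epsilon_{\pi(j)}},\sum_{j\le k}u_{\pi(j)}\big)$, $k=1,\dots,m$; $\mathbf{u}\succ_g\mathbf{v}$ iff $T(\mathbf{u})\ge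 T(\mathbf{v})$ pointwise. *)

theory Defs
  imports "HOL-Analysis.Analysis"
begin

text \<open>Hamiltonians with m levels are given by energy functions eps on indices 0..m-1,
  probability vectors by functions u on 0..m-1.\<close>

definition prob_vec :: "nat \<Rightarrow> (nat \<Rightarrow> real) \<Rightarrow> bool" where
  "prob_vec m u \<longleftrightarrow> (\<forall>i<m. 0 \<le> u i) \<and> (\<Sum>i<m. u i) = 1"

definition part_fun :: "real \<Rightarrow> nat \<Rightarrow> (nat \<Rightarrow> real) \<Rightarrow> real" where
  "part_fun \<beta> m eps = (\<Sum>j<m. exp (- \<beta> * eps j))"

text \<open>pi orders u_(pi 1) e^(beta eps_(pi 1)) >= ... >= u_(pi m) e^(beta eps_(pi m))
  (0-indexed here).\<close>
definition tm_order :: "real \<Rightarrow> nat \<Rightarrow> (nat \<Rightarrow> real) \<Rightarrow> (nat \<Rightarrow> real) \<Rightarrow> (nat \<Rightarrow> nat) \<Rightarrow> bool" where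
  "tm_order \<beta> m eps u \<pi> \<longleftrightarrow> \<pi> permutes {..<m} \<and>
     (\<forall>j k. j \<le> k \<and> k < m \<longrightarrow>
        u (\<pi> k) * exp (\<beta> * eps (\<pi> k)) \<le> u (\<pi> j) * exp (\<beta> * eps (\<pi> j)))"

text \<open>Elbow points of the curve: (X k, Y k), k = 0..m, with (X 0, Y 0) the origin.\<close>
definition tm_X :: "real \<Rightarrow> (nat \<Rightarrow> real) \<Rightarrow> (nat \<Rightarrow> nat) \<Rightarrow> nat \<Rightarrow> real" where
  "tm_X \<beta> eps \<pi> k = (\<Sum>j<k. exp (- \<beta> * eps (\<pi> j)))"

definition tm_Y :: "(nat \<Rightarrow> real) \<Rightarrow> (nat \<Rightarrow> nat) \<Rightarrow> nat \<Rightarrow> real" where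
  "tm_Y u \<pi> k = (\<Sum>j<k. u (\<pi> j))"

definition tm_seg :: "real \<Rightarrow> (nat \<Rightarrow> real) \<Rightarrow> (nat \<Rightarrow> real) \<Rightarrow> (nat \<Rightarrow> nat) \<Rightarrow> nat \<Rightarrow> real \<Rightarrow> real" where
  "tm_seg \<beta> eps u \<pi> k x =
     tm_Y u \<pi> k + (x - tm_X \<beta> eps \<pi> k) / (tm_X \<beta> eps \<pi> (Suc k) - tm_X \<beta> eps \<pi> k)
                     * (tm_Y u \<pi> (Suc k) - tm_Y u \<pi> k)"

text \<open>Thermo-majorisation u \<succ>_g v w.r.t. the Hamiltonian with energies eps (m levels):
  the piecewise linear curve T(u) lies pointwise (on [0,Z]) above T(v).  At every x,
  T(u)(x) is the value of the segment of T(u) whose x-range contains x.  The curve does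
  not depend on the choice of ordering permutation among ties, so we quantify over all
  admissible orderings.\<close>
definition thermo_maj :: "real \<Rightarrow> nat \<Rightarrow> (nat \<Rightarrow> real) \<Rightarrow> (nat \<Rightarrow> real) \<Rightarrow> (nat \<Rightarrow> real) \<Rightarrow> bool" where
  "thermo_maj \<beta> m eps u v \<longleftrightarrow>
     (\<forall>\<pi> \<sigma> x k l. tm_order \<beta> m eps u \<pi> \<and> tm_order \<beta> m eps v \<sigma> \<and>
        0 \<le> x \<and> x \<le> part_fun \<beta> m eps \<and>
        k < m \<and> tm_X \<beta> eps \<pi> k \<le> x \<and> x \<le> tm_X \<beta> eps \<pi> (Suc k) \<and>
        l < m \<and> tm_X \<beta> eps \<sigma> l \<le> x \<and> x \<le> tm_X \<beta> eps \<sigma> (Suc l) \<longrightarrow>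
        tm_seg \<beta> eps v \<sigma> l x \<le> tm_seg \<beta> eps u \<pi> k x)"

text \<open>Joint system S+battery, 2n levels: index i < n is |i>|0>, index n+i is |i>|1>.\<close>
definition H_SW :: "nat \<Rightarrow> (nat \<Rightarrow> real) \<Rightarrow> real \<Rightarrow> nat \<Rightarrow> real" where
  "H_SW n E W j = (if j < n then E j else E (j - n) + W)"

definition tensor_bat0 :: "nat \<Rightarrow> (nat \<Rightarrow> real) \<Rightarrow> nat \<Rightarrow> real" where
  "tensor_bat0 n x j = (if j < n then x j else 0)"

definition tensor_bat1 :: "nat \<Rightarrow> (nat \<Rightarrow> real) \<Rightarrow> nat \<Rightarrow> real" where
  "tensor_bat1 n x j = (if j < n then 0 else x (j - n))"

definition gibbs :: "real \<Rightarrow> nat \<Rightarrow> (nat \<Rightarrow> real) \<Rightarrow> nat \<Rightarrow> real" where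
  "gibbs \<beta> n E i = exp (- \<beta> * E i) / part_fun \<beta> n E"

end

theory Submission
  imports Defs "HOL-Combinatorics.List_Permutation"
begin

lemma order_exists: "\<exists>\<pi>. tm_order \<beta> m eps u \<pi>"
proof -
  define f where "f j = - (u j * exp (\<beta> * eps j))" for j
  define xs where "xs = sort_key f [0..<m]"
  have ms: "mset xs = mset [0..<m]" by (simp add: xs_def)
  obtain p where p: "bij_betw p {..<length xs} {..<length [0..<m]}"
      "\<forall>i<length xs. xs ! i = [0..<m] ! p i"
    using permutation_Ex_bij[OF ms] by blast
  have len: "length xs = m" by (simp add: xs_def)
  have pb: "bij_betw p {..<m} {..<m}" using p(1) len by simp
  have xi: "\<forall>i<m. xs ! i = p i"
  proof (intro allI impI)
    fix i assume "i < m"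
    then have "p i < m" using pb by (auto dest: bij_betwE)
    then show "xs ! i = p i" using p(2) len \<open>i < m\<close> by simp
  qed
  define \<pi> where "\<pi> i = (if i < m then p i else i)" for i
  have "bij_betw \<pi> {..<m} {..<m}"
    using pb by (rule bij_betw_cong[THEN iffD1, rotated]) (simp add: \<pi>_def)
  then have perm: "\<pi> permutes {..<m}"
    by (rule bij_imp_permutes) (simp add: \<pi>_def)
  have srt: "sorted (map f xs)" by (simp add: xs_def)
  have "u (\<pi> k) * exp (\<beta> * eps (\<pi> k)) \<le> u (\<pi> j) * exp (\<beta> * eps (\<pi> j))"
    if "j \<le> k" "k < m" for j k
  proof -
    have "map f xs ! j \<le> map f xs ! k" using sorted_nth_mono[OF srt that(1)] that len by simp
    then have "f (xs ! j) \<le> f (xs ! k)" using that len by simp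
    then show ?thesis using that xi by (simp add: f_def \<pi>_def)
  qed
  then show ?thesis using perm unfolding tm_order_def by blast
qed


lemma Y_le1:
  assumes "\<pi> permutes {..<m}" "\<forall>j<m. 0 \<le> u j" "(\<Sum>j<m. u j) = 1" "k \<le> m"
  shows "tm_Y u \<pi> k \<le> 1"
proof -
  have inj: "inj_on \<pi> {..<k}" using permutes_inj[OF assms(1)] by (auto intro: inj_on_subset)
  have sub: "\<pi> ` {..<k} \<subseteq> {..<m}" using assms(1,4) permutes_in_image by fastforce
  have "tm_Y u \<pi> k = sum u (\<pi> ` {..<k})"
    unfolding tm_Y_def using sum.reindex[OF inj, of u] by (simp add: comp_def)
  also have "\<dots> \<le> sum u {..<m}" using sub assms(2) by (intro sum_mono2) auto
  finally show ?thesis using assms(3) by simp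
qed

lemma Y_mono:
  assumes "\<pi> permutes {..<m}" "\<forall>j<m. 0 \<le> u j" "k \<le> k'" "k' \<le> m"
  shows "tm_Y u \<pi> k \<le> tm_Y u \<pi> k'"
  unfolding tm_Y_def
proof (rule sum_mono2)
  show "\<And>b. b \<in> {..<k'} - {..<k} \<Longrightarrow> 0 \<le> u (\<pi> b)"
    using assms permutes_in_image[OF assms(1)] by auto
qed (use assms in auto)

lemma X_Suc: "tm_X \<beta> eps \<pi> (Suc k) = tm_X \<beta> eps \<pi> k + exp (- \<beta> * eps (\<pi> k))"
  by (simp add: tm_X_def)

lemma Y_Suc: "tm_Y u \<pi> (Suc k) = tm_Y u \<pi> k + u (\<pi> k)"
  by (simp add: tm_Y_def)

lemma seg_upper:
  assumes "\<pi> permutes {..<m}" "\<forall>j<m. 0 \<le> u j"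
    "\<forall>j<m. u j * exp (\<beta> * eps j) \<le> M" "k < m"
    "tm_X \<beta> eps \<pi> k \<le> y" "y \<le> tm_X \<beta> eps \<pi> (Suc k)"
  shows "tm_seg \<beta> eps u \<pi> k y \<le> M * y"
proof -
  have ub: "u (\<pi> j) \<le> M * exp (- \<beta> * eps (\<pi> j))" if "j < m" for j
  proof -
    have "\<pi> j < m" using permutes_in_image[OF assms(1)] that by auto
    then have "u (\<pi> j) * exp (\<beta> * eps (\<pi> j)) \<le> M" using assms(3) by blast
    then have "u (\<pi> j) * exp (\<beta> * eps (\<pi> j)) * exp (- \<beta> * eps (\<pi> j)) \<le> M * exp (- \<beta> * eps (\<pi> j))"
      by (intro mult_right_mono) auto
    then show ?thesis by (simp add: mult.assoc flip: exp_add)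
  qed
  have Yk: "tm_Y u \<pi> k \<le> M * tm_X \<beta> eps \<pi> k"
    unfolding tm_Y_def tm_X_def sum_distrib_left using assms(4) ub by (intro sum_mono) auto
  define D where "D = exp (- \<beta> * eps (\<pi> k))"
  have D: "D > 0" by (simp add: D_def)
  have d: "u (\<pi> k) \<le> M * D" using ub assms(4) by (simp add: D_def)
  have t: "(y - tm_X \<beta> eps \<pi> k) / D \<ge> 0" using assms(5) D by simp
  have "tm_seg \<beta> eps u \<pi> k y = tm_Y u \<pi> k + (y - tm_X \<beta> eps \<pi> k) / D * u (\<pi> k)"
    unfolding tm_seg_def X_Suc Y_Suc D_def by simp
  also have "\<dots> \<le> M * tm_X \<beta> eps \<pi> k + (y - tm_X \<beta> eps \<pi> k) / D * (M * D)"
    using Yk d t by (intro add_mono mult_left_mono) auto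
  also have "\<dots> = M * y" using D by (simp add: field_simps)
  finally show ?thesis .
qed

lemma seg_le1:
  assumes "\<pi> permutes {..<m}" "\<forall>j<m. 0 \<le> u j" "(\<Sum>j<m. u j) = 1" "k < m"
    "tm_X \<beta> eps \<pi> k \<le> y" "y \<le> tm_X \<beta> eps \<pi> (Suc k)"
  shows "tm_seg \<beta> eps u \<pi> k y \<le> 1"
proof -
  define D where "D = exp (- \<beta> * eps (\<pi> k))"
  have D: "D > 0" by (simp add: D_def)
  have t0: "(y - tm_X \<beta> eps \<pi> k) / D \<ge> 0" using assms(5) D by simp
  have t1: "(y - tm_X \<beta> eps \<pi> k) / D \<le> 1" using assms(6) D by (simp add: X_Suc D_def)
  have u0: "u (\<pi> k) \<ge> 0" using assms(2,4) permutes_in_image[OF assms(1)] by auto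
  have "tm_seg \<beta> eps u \<pi> k y = tm_Y u \<pi> k + (y - tm_X \<beta> eps \<pi> k) / D * u (\<pi> k)"
    unfolding tm_seg_def X_Suc Y_Suc D_def by simp
  also have "\<dots> \<le> tm_Y u \<pi> k + 1 * u (\<pi> k)"
    using t1 u0 by (intro add_left_mono mult_right_mono) auto
  also have "\<dots> = tm_Y u \<pi> (Suc k)" by (simp add: Y_Suc)
  also have "\<dots> \<le> 1" using Y_le1[OF assms(1,2,3)] assms(4) by simp
  finally show ?thesis .
qed


lemma Z_pos: "0 < n \<Longrightarrow> part_fun \<beta> n E > 0"
  unfolding part_fun_def by (intro sum_pos) auto

lemma sum_hi: assumes npos: "0 < n" shows "sum (tensor_bat1 n (gibbs \<beta> n E)) {n..<2*n} = 1"
proof -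
  have e: "{n..<2*n} = (\<lambda>i. i + n) ` {..<n}" 
  proof (rule set_eqI, rule iffI)
    fix z assume "z \<in> {n..<2*n}"
    then have "z - n \<in> {..<n}" "z = (z - n) + n" by auto
    then show "z \<in> (\<lambda>i. i + n) ` {..<n}" by blast
  qed auto
  have "sum (tensor_bat1 n (gibbs \<beta> n E)) {n..<2*n} = (\<Sum>i<n. gibbs \<beta> n E i)"
    unfolding e by (subst sum.reindex) (auto simp: tensor_bat1_def inj_on_def)
  also have "\<dots> = 1" using Z_pos[OF npos, of \<beta> E]
    by (simp add: gibbs_def part_fun_def flip: sum_divide_distrib)
  finally show ?thesis .
qed

lemma sum_all: assumes npos: "0 < n" shows "(\<Sum>j<2*n. tensor_bat1 n (gibbs \<beta> n E) j) = 1"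
proof -
  have "(\<Sum>j<2*n. tensor_bat1 n (gibbs \<beta> n E) j) = sum (tensor_bat1 n (gibbs \<beta> n E)) {0..<n}
        + sum (tensor_bat1 n (gibbs \<beta> n E)) {n..<2*n}"
    by (simp add: lessThan_atLeast0 sum.atLeastLessThan_concat)
  also have "sum (tensor_bat1 n (gibbs \<beta> n E)) {0..<n} = 0" by (simp add: tensor_bat1_def)
  finally show ?thesis using sum_hi[OF npos] by simp
qed

lemma bat1_nonneg: "0 < n \<Longrightarrow> \<forall>j<m. 0 \<le> tensor_bat1 n (gibbs \<beta> n E) j"
  using Z_pos[of n \<beta> E] by (simp add: tensor_bat1_def gibbs_def less_imp_le)

definition cc :: "real \<Rightarrow> real \<Rightarrow> nat \<Rightarrow> (nat \<Rightarrow> real) \<Rightarrow> real" where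
  "cc \<beta> W n E = exp (\<beta> * W) / part_fun \<beta> n E"

context
  fixes \<beta> W :: real and n :: nat and E :: "nat \<Rightarrow> real" and \<pi> :: "nat \<Rightarrow> nat"
  assumes npos: "0 < n"
    and ord: "tm_order \<beta> (2*n) (H_SW n E W) (tensor_bat1 n (gibbs \<beta> n E)) \<pi>"
begin

lemma cc_pos: "(cc \<beta> W n E) > 0" using Z_pos[OF npos] by (simp add: cc_def)

lemma perm: "\<pi> permutes {..<2*n}" using ord by (simp add: tm_order_def)

lemma u_val: "n \<le> j \<Longrightarrow> tensor_bat1 n (gibbs \<beta> n E) j = (cc \<beta> W n E) * exp (- \<beta> * H_SW n E W j)"
  by (simp add: tensor_bat1_def gibbs_def H_SW_def cc_def field_simps flip: exp_add)

lemma u_val2: "n \<le> j \<Longrightarrow> tensor_bat1 n (gibbs \<beta> n E) j * exp (\<beta> * H_SW n E W j) = (cc \<beta> W n E)"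
  by (simp add: u_val mult.assoc flip: exp_add)

lemma u_first: assumes "k < n" shows "n \<le> \<pi> k"
proof (rule ccontr)
  assume "\<not> n \<le> \<pi> k"
  then have pk: "\<pi> k < n" by simp
  have inj: "inj \<pi>" using permutes_inj[OF perm] .
  have "\<exists>p. n \<le> p \<and> p < 2*n \<and> n \<le> \<pi> p"
  proof (rule ccontr)
    assume na: "\<not> (\<exists>p. n \<le> p \<and> p < 2*n \<and> n \<le> \<pi> p)"
    have sub: "\<pi> ` {n..<2*n} \<subseteq> {..<n}"
    proof
      fix z assume "z \<in> \<pi> ` {n..<2*n}"
      then obtain j where j: "n \<le> j" "j < 2*n" "z = \<pi> j" by auto
      then have "\<not> n \<le> \<pi> j" using na by blast
      then show "z \<in> {..<n}" using j by simp
    qed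
    have "inj_on \<pi> {n..<2*n}" using inj_on_subset[OF inj subset_UNIV] .
    then have "card (\<pi> ` {n..<2*n}) = n" by (simp add: card_image)
    then have "\<pi> ` {n..<2*n} = {..<n}" using sub by (intro card_subset_eq) auto
    then have "\<pi> k \<in> \<pi> ` {n..<2*n}" using pk by auto
    then obtain q where q: "q \<in> {n..<2*n}" "\<pi> k = \<pi> q" by auto
    then have "k = q" using inj by (simp add: inj_eq)
    then show False using q(1) assms by simp
  qed
  then obtain p where p: "n \<le> p" "p < 2*n" "n \<le> \<pi> p" by blast
  have "k \<le> p" using p assms by simp
  then have "tensor_bat1 n (gibbs \<beta> n E) (\<pi> p) * exp (\<beta> * H_SW n E W (\<pi> p))
      \<le> tensor_bat1 n (gibbs \<beta> n E) (\<pi> k) * exp (\<beta> * H_SW n E W (\<pi> k))"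
    using ord p(2) unfolding tm_order_def by blast
  then have "(cc \<beta> W n E) \<le> 0" using u_val2[OF p(3)] pk by (simp add: tensor_bat1_def)
  then show False using cc_pos by simp
qed

lemma Y_lin: "k \<le> n \<Longrightarrow> tm_Y (tensor_bat1 n (gibbs \<beta> n E)) \<pi> k = (cc \<beta> W n E) * tm_X \<beta> (H_SW n E W) \<pi> k"
  unfolding tm_Y_def tm_X_def sum_distrib_left
  by (intro sum.cong refl) (simp add: u_val u_first)

lemma Y_n: "tm_Y (tensor_bat1 n (gibbs \<beta> n E)) \<pi> n = 1"
proof -
  have inj: "inj \<pi>" using permutes_inj[OF perm] .
  have sub: "\<pi> ` {..<n} \<subseteq> {n..<2*n}" using u_first permutes_in_image[OF perm] by auto
  have "card (\<pi> ` {..<n}) = n" using card_image[OF inj_on_subset[OF inj subset_UNIV]] by simp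
  then have img: "\<pi> ` {..<n} = {n..<2*n}" using sub by (intro card_subset_eq) auto
  have "tm_Y (tensor_bat1 n (gibbs \<beta> n E)) \<pi> n = sum (tensor_bat1 n (gibbs \<beta> n E)) (\<pi> ` {..<n})"
    unfolding tm_Y_def using sum.reindex[OF inj_on_subset[OF inj], of "{..<n}" "tensor_bat1 n (gibbs \<beta> n E)"]
    by (simp add: comp_def)
  also have "\<dots> = 1" unfolding img using sum_hi[OF npos] .
  finally show ?thesis .
qed

lemma u_seg:
  assumes "k < 2*n" "tm_X \<beta> (H_SW n E W) \<pi> k \<le> y" "y \<le> tm_X \<beta> (H_SW n E W) \<pi> (Suc k)"
  shows "(k < n \<longrightarrow> tm_seg \<beta> (H_SW n E W) (tensor_bat1 n (gibbs \<beta> n E)) \<pi> k y = (cc \<beta> W n E) * y)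
       \<and> (n \<le> k \<longrightarrow> tm_seg \<beta> (H_SW n E W) (tensor_bat1 n (gibbs \<beta> n E)) \<pi> k y = 1)"
proof safe
  assume "k < n"
  then show "tm_seg \<beta> (H_SW n E W) (tensor_bat1 n (gibbs \<beta> n E)) \<pi> k y = (cc \<beta> W n E) * y"
    unfolding tm_seg_def using Y_lin[of k] Y_lin[of "Suc k"] 
    by (simp add: X_Suc field_simps)
next
  assume nk: "n \<le> k"
  have nn: "\<forall>j<2*n. 0 \<le> tensor_bat1 n (gibbs \<beta> n E) j" using bat1_nonneg[OF npos] .
  have sm: "(\<Sum>j<2*n. tensor_bat1 n (gibbs \<beta> n E) j) = 1" using sum_all[OF npos] .
  have y1: "tm_Y (tensor_bat1 n (gibbs \<beta> n E)) \<pi> k = 1"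
    using Y_le1[OF perm nn sm, of k] Y_mono[OF perm nn nk] Y_n assms(1) by simp
  have y2: "tm_Y (tensor_bat1 n (gibbs \<beta> n E)) \<pi> (Suc k) = 1"
    using Y_le1[OF perm nn sm, of "Suc k"] Y_mono[OF perm nn, of n "Suc k"] Y_n assms(1) nk by simp
  show "tm_seg \<beta> (H_SW n E W) (tensor_bat1 n (gibbs \<beta> n E)) \<pi> k y = 1"
    unfolding tm_seg_def y1 y2 by simp
qed

end


lemma bat0_facts:
  assumes "prob_vec n x" "\<forall>i<n. x i * exp (\<beta> * E i) \<le> M" "0 \<le> M"
  shows "\<forall>j<2*n. 0 \<le> tensor_bat0 n x j"
    and "(\<Sum>j<2*n. tensor_bat0 n x j) = 1"
    and "\<forall>j<2*n. tensor_bat0 n x j * exp (\<beta> * H_SW n E W j) \<le> M"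
proof -
  show "\<forall>j<2*n. 0 \<le> tensor_bat0 n x j" using assms(1) by (simp add: prob_vec_def tensor_bat0_def)
  have "(\<Sum>j<2*n. tensor_bat0 n x j) = sum (tensor_bat0 n x) {0..<n} + sum (tensor_bat0 n x) {n..<2*n}"
    by (simp add: lessThan_atLeast0 sum.atLeastLessThan_concat)
  also have "sum (tensor_bat0 n x) {n..<2*n} = 0" by (simp add: tensor_bat0_def)
  also have "sum (tensor_bat0 n x) {0..<n} = sum x {..<n}"
    by (simp add: lessThan_atLeast0 tensor_bat0_def)
  finally show "(\<Sum>j<2*n. tensor_bat0 n x j) = 1" using assms(1) by (simp add: prob_vec_def)
  show "\<forall>j<2*n. tensor_bat0 n x j * exp (\<beta> * H_SW n E W j) \<le> M"
    using assms(2,3) by (simp add: tensor_bat0_def H_SW_def)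
qed

theorem mainTheorem9:
  fixes \<beta> :: real and n :: nat and E x :: "nat \<Rightarrow> real"
  assumes "\<beta> > 0"
    and "prob_vec n x"
  defines "Wset \<equiv> {W :: real. thermo_maj \<beta> (2 * n) (H_SW n E W)
                      (tensor_bat1 n (gibbs \<beta> n E)) (tensor_bat0 n x)}"
  shows "Inf Wset \<in> Wset \<and> (\<forall>W\<in>Wset. Inf Wset \<le> W)
       \<and> Inf Wset = (1 / \<beta>) * ln (part_fun \<beta> n E * (MAX i\<in>{..<n}. x i * exp (\<beta> * E i)))
       \<and> Inf Wset = (1 / \<beta>) * ln (MAX i\<in>{..<n}. x i / gibbs \<beta> n E i)"
proof -
  have npos: "0 < n"
  proof (rule ccontr)
    assume "\<not> 0 < n" then have "n = 0" by simp
    then show False using assms(2) by (simp add: prob_vec_def)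
  qed
  define Z where "Z = part_fun \<beta> n E"
  have Zp: "Z > 0" using Z_pos[OF npos] by (simp add: Z_def)
  define f where "f i = x i * exp (\<beta> * E i)" for i
  define M where "M = (MAX i\<in>{..<n}. f i)"
  have fin: "finite (f ` {..<n})" "f ` {..<n} \<noteq> {}" using npos by auto
  have Mge: "\<forall>i<n. x i * exp (\<beta> * E i) \<le> M"
    using fin unfolding M_def f_def by auto
  obtain i0 where i0: "i0 < n" "M = x i0 * exp (\<beta> * E i0)"
    using Max_in[OF fin] unfolding M_def f_def by auto
  have "\<exists>i<n. 0 < x i"
  proof (rule ccontr)
    assume "\<not> (\<exists>i<n. 0 < x i)"
    then have "\<forall>i<n. x i = 0" using assms(2) by (force simp: prob_vec_def)
    then show False using assms(2) by (simp add: prob_vec_def)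
  qed
  then obtain i1 where i1: "i1 < n" "0 < x i1" by blast
  have Mp: "M > 0" using Mge i1 by (smt (verit) exp_gt_zero mult_pos_pos)
  define W0 where "W0 = 1 / \<beta> * ln (Z * M)"
  have cW: "W0 \<le> W \<longleftrightarrow> M \<le> exp (\<beta> * W) / Z" for W
  proof -
    have "W0 \<le> W \<longleftrightarrow> ln (Z * M) \<le> \<beta> * W"
      using assms(1) by (simp add: W0_def pos_divide_le_eq mult.commute)
    also have "\<dots> \<longleftrightarrow> exp (ln (Z * M)) \<le> exp (\<beta> * W)" by simp
    also have "\<dots> \<longleftrightarrow> Z * M \<le> exp (\<beta> * W)" using Zp Mp by simp
    also have "\<dots> \<longleftrightarrow> M \<le> exp (\<beta> * W) / Z" using Zp by (simp add: pos_le_divide_eq mult.commute)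
    finally show ?thesis .
  qed
  note bf = bat0_facts[OF assms(2) Mge less_imp_le[OF Mp]]
  have key: "W \<in> Wset \<longleftrightarrow> W0 \<le> W" for W
  proof
    assume "W0 \<le> W"
    then have Mc: "M \<le> exp (\<beta> * W) / Z" using cW by simp
    show "W \<in> Wset" unfolding Wset_def mem_Collect_eq thermo_maj_def
    proof (intro allI impI)
      fix \<pi> \<sigma> y k l
      assume A: "tm_order \<beta> (2 * n) (H_SW n E W) (tensor_bat1 n (gibbs \<beta> n E)) \<pi> \<and>
         tm_order \<beta> (2 * n) (H_SW n E W) (tensor_bat0 n x) \<sigma> \<and>
         0 \<le> y \<and> y \<le> part_fun \<beta> (2 * n) (H_SW n E W) \<and>
         k < 2 * n \<and> tm_X \<beta> (H_SW n E W) \<pi> k \<le> y \<and> y \<le> tm_X \<beta> (H_SW n E W) \<pi> (Suc k) \<and>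
         l < 2 * n \<and> tm_X \<beta> (H_SW n E W) \<sigma> l \<le> y \<and> y \<le> tm_X \<beta> (H_SW n E W) \<sigma> (Suc l)"
      have ps: "\<sigma> permutes {..<2*n}" using A by (simp add: tm_order_def)
      have v1: "tm_seg \<beta> (H_SW n E W) (tensor_bat0 n x) \<sigma> l y \<le> M * y"
        using seg_upper[OF ps bf(1) bf(3)] A by blast
      have v2: "tm_seg \<beta> (H_SW n E W) (tensor_bat0 n x) \<sigma> l y \<le> 1"
        using seg_le1[OF ps bf(1) bf(2)] A by blast
      have us: "(k < n \<longrightarrow> tm_seg \<beta> (H_SW n E W) (tensor_bat1 n (gibbs \<beta> n E)) \<pi> k y = cc \<beta> W n E * y)
       \<and> (n \<le> k \<longrightarrow> tm_seg \<beta> (H_SW n E W) (tensor_bat1 n (gibbs \<beta> n E)) \<pi> k y = 1)"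
        using u_seg[OF npos] A by blast
      have ccv: "cc \<beta> W n E = exp (\<beta> * W) / Z" by (simp add: cc_def Z_def)
      have "M * y \<le> exp (\<beta> * W) / Z * y" using Mc A by (intro mult_right_mono) auto
      then show "tm_seg \<beta> (H_SW n E W) (tensor_bat0 n x) \<sigma> l y
                 \<le> tm_seg \<beta> (H_SW n E W) (tensor_bat1 n (gibbs \<beta> n E)) \<pi> k y"
        using us v1 v2 ccv by (cases "k < n") auto
    qed
  next
    assume W: "W \<in> Wset"
    show "W0 \<le> W"
    proof (rule ccontr)
      assume "\<not> W0 \<le> W"
      then have cM: "exp (\<beta> * W) / Z < M" using cW by simp
      obtain \<pi> where \<pi>: "tm_order \<beta> (2 * n) (H_SW n E W) (tensor_bat1 n (gibbs \<beta> n E)) \<pi>"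
        using order_exists by blast
      obtain \<sigma> where \<sigma>: "tm_order \<beta> (2 * n) (H_SW n E W) (tensor_bat0 n x) \<sigma>"
        using order_exists by blast
      have ps: "\<sigma> permutes {..<2*n}" using \<sigma> by (simp add: tm_order_def)
      have "i0 \<in> \<sigma> ` {..<2*n}" using permutes_image[OF ps] i0 by auto
      then obtain j where j: "j < 2*n" "\<sigma> j = i0" by auto
      have "tensor_bat0 n x (\<sigma> j) * exp (\<beta> * H_SW n E W (\<sigma> j))
          \<le> tensor_bat0 n x (\<sigma> 0) * exp (\<beta> * H_SW n E W (\<sigma> 0))"
        using \<sigma> j unfolding tm_order_def by blast
      then have val: "M \<le> tensor_bat0 n x (\<sigma> 0) * exp (\<beta> * H_SW n E W (\<sigma> 0))"
        using j i0 by (simp add: tensor_bat0_def H_SW_def)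
      define a where "a = exp (- \<beta> * H_SW n E W (\<sigma> 0))"
      define b where "b = exp (- \<beta> * H_SW n E W (\<pi> 0))"
      have ap: "a > 0" "b > 0" by (auto simp: a_def b_def)
      have va: "M * a \<le> tensor_bat0 n x (\<sigma> 0)"
      proof -
        have "M * a \<le> tensor_bat0 n x (\<sigma> 0) * exp (\<beta> * H_SW n E W (\<sigma> 0)) * a"
          using val ap by (intro mult_right_mono) auto
        then show ?thesis by (simp add: a_def mult.assoc flip: exp_add)
      qed
      define y where "y = min a b"
      have yp: "y > 0" "y \<le> a" "y \<le> b" using ap by (auto simp: y_def)
      have s0: "0 < 2*n" using npos by simp
      have "\<sigma> 0 < 2*n" using permutes_in_image[OF ps] s0 by simp
      then have "a \<le> part_fun \<beta> (2 * n) (H_SW n E W)"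
        unfolding a_def part_fun_def by (intro member_le_sum) auto
      then have thm1: "tm_seg \<beta> (H_SW n E W) (tensor_bat0 n x) \<sigma> 0 y
                 \<le> tm_seg \<beta> (H_SW n E W) (tensor_bat1 n (gibbs \<beta> n E)) \<pi> 0 y"
        using W \<pi> \<sigma> yp s0 unfolding Wset_def mem_Collect_eq thermo_maj_def
        by (auto simp: tm_X_def a_def b_def)
      have "tm_seg \<beta> (H_SW n E W) (tensor_bat0 n x) \<sigma> 0 y = y / a * tensor_bat0 n x (\<sigma> 0)"
        by (simp add: tm_seg_def tm_X_def tm_Y_def a_def)
      also have "\<dots> \<ge> y / a * (M * a)" using va yp ap by (intro mult_left_mono) auto
      finally have L: "M * y \<le> tm_seg \<beta> (H_SW n E W) (tensor_bat0 n x) \<sigma> 0 y" using ap by (simp add: mult.commute)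
      have "tm_seg \<beta> (H_SW n E W) (tensor_bat1 n (gibbs \<beta> n E)) \<pi> 0 y = cc \<beta> W n E * y"
        using u_seg[OF npos \<pi>, of 0 y] s0 npos yp by (simp add: tm_X_def b_def)
      then have "M * y \<le> exp (\<beta> * W) / Z * y" using L thm1 by (simp add: cc_def Z_def)
      then have "M \<le> exp (\<beta> * W) / Z" using yp mult_right_le_imp_le[of M y "exp (\<beta> * W) / Z"] by simp
      then show False using cM by simp
    qed
  qed
  have WS: "Wset = {W0..}" using key by auto
  have Inf: "Inf Wset = W0" unfolding WS by simp
  have mx: "(MAX i\<in>{..<n}. x i / gibbs \<beta> n E i) = Z * M"
  proof -
    have "(\<lambda>i. x i / gibbs \<beta> n E i) ` {..<n} = (\<lambda>v. Z * v) ` (f ` {..<n})"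
      unfolding image_image
      by (intro image_cong refl) (simp add: gibbs_def f_def Z_def exp_minus field_simps)
    moreover have "mono (\<lambda>v. Z * v)" using Zp by (auto intro: monoI mult_left_mono)
    ultimately show ?thesis using mono_Max_commute[of "\<lambda>v. Z * v", OF _ fin] by (simp add: M_def)
  qed
  show ?thesis unfolding Inf using key mx
    by (simp add: W0_def Z_def M_def f_def)
qed

end
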